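(* For every precise separable two-sorted ultrametric space $X$ there is a uniformly continuous dc-embedding $e\colon X\to\overline{\mathbb U}$.
   Context: A two-sorted ultrametric space is $(X,d_X,D_X)$ with $D_X$ a linear order with least element $0$, $d_X\colon X\times X\to D_X$ symmetric, $d_X(x,y)=0\iff x=y$, $d_X(x,z)\le\max\{d_X(x,y),d_X(y,z)\}$; precise if $d_X$ is onto $D_X$. A dc-embedding is an injection on points with an order embedding $D_f$ of distance sets fixing $0$ such that $d(f(x),f(x'))=D_f(d(x,x'))$. The topology and uniformity of $X$ are generated by the open balls $B_r(a)=\{x:d(x,a)<r\}$, $r\in D_X\setminus\{0\}$; separable means having a countable dense subset. $\mathbb U$ is the countable rational Urysohn ultrametric space viewed as a two-sorted space with distance set $\mathbb Q_{\ge0}$, and $\overline{\mathbb U}$ is its Cauchy completion: the Cauchy complete two-sorted ultrametric space with distance set $\mathbb Q_{\ge0}$ containing $\mathbb U$ as a dense isometric subspace (Cauchy complete: every chain of balls containing, for every $r\in D\setminus\{0\}$, a member contained in some ball of radius $r$ has nonempty intersection). *)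

theory Defs
  imports Main "HOL-Library.Countable_Set"
begin

text \<open>A two-sorted ultrametric space is given by a point set X, a distance set D
  (a subset of a linearly ordered type) with least element z (the distance 0),
  and a distance function d.\<close>

definition ultrametric2 :: "'a set \<Rightarrow> 'd::linorder set \<Rightarrow> 'd \<Rightarrow> ('a \<Rightarrow> 'a \<Rightarrow> 'd) \<Rightarrow> bool" where
  "ultrametric2 X D z d \<longleftrightarrow>
     z \<in> D \<and> (\<forall>r\<in>D. z \<le> r) \<and>
     (\<forall>x\<in>X. \<forall>y\<in>X. d x y \<in> D \<and> d x y = d y x \<and> (d x y = z \<longleftrightarrow> x = y)) \<and>
     (\<forall>x\<in>X. \<forall>y\<in>X. \<forall>w\<in>X. d x w \<le> max (d x y) (d y w))"

definition precise2 :: "'a set \<Rightarrow> 'd set \<Rightarrow> ('a \<Rightarrow> 'a \<Rightarrow> 'd) \<Rightarrow> bool" where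
  "precise2 X D d \<longleftrightarrow> (\<forall>r\<in>D. \<exists>x\<in>X. \<exists>y\<in>X. d x y = r)"

definition ball2 :: "'a set \<Rightarrow> ('a \<Rightarrow> 'a \<Rightarrow> 'd::linorder) \<Rightarrow> 'a \<Rightarrow> 'd \<Rightarrow> 'a set" where
  "ball2 X d a r = {x \<in> X. d x a < r}"

definition balls2 :: "'a set \<Rightarrow> 'd::linorder set \<Rightarrow> 'd \<Rightarrow> ('a \<Rightarrow> 'a \<Rightarrow> 'd) \<Rightarrow> 'a set set" where
  "balls2 X D z d = {ball2 X d a r | a r. a \<in> X \<and> r \<in> D \<and> r \<noteq> z}"

text \<open>C is dense in the topology generated by the open balls: every nonempty
  finite intersection of open balls (basic open set) meets C.\<close>
definition dense2 :: "'a set \<Rightarrow> 'd::linorder set \<Rightarrow> 'd \<Rightarrow> ('a \<Rightarrow> 'a \<Rightarrow> 'd) \<Rightarrow> 'a set \<Rightarrow> bool" where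
  "dense2 X D z d C \<longleftrightarrow> C \<subseteq> X \<and>
     (\<forall>F. finite F \<and> F \<subseteq> balls2 X D z d \<and> X \<inter> \<Inter>F \<noteq> {} \<longrightarrow> C \<inter> \<Inter>F \<noteq> {})"

definition separable2 :: "'a set \<Rightarrow> 'd::linorder set \<Rightarrow> 'd \<Rightarrow> ('a \<Rightarrow> 'a \<Rightarrow> 'd) \<Rightarrow> bool" where
  "separable2 X D z d \<longleftrightarrow> (\<exists>C. countable C \<and> dense2 X D z d C)"

definition cauchy_complete2 :: "'a set \<Rightarrow> 'd::linorder set \<Rightarrow> 'd \<Rightarrow> ('a \<Rightarrow> 'a \<Rightarrow> 'd) \<Rightarrow> bool" where
  "cauchy_complete2 X D z d \<longleftrightarrow>
     (\<forall>\<B>. \<B> \<subseteq> balls2 X D z d \<and> (\<forall>A\<in>\<B>. \<forall>B\<in>\<B>. A \<subseteq> B \<or> B \<subseteq> A) \<and>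
          (\<forall>r\<in>D - {z}. \<exists>B\<in>\<B>. \<exists>a\<in>X. B \<subseteq> ball2 X d a r)
        \<longrightarrow> X \<inter> \<Inter>\<B> \<noteq> {})"

text \<open>Uniform continuity w.r.t. the uniformities generated by the entourages
  {(x,y). d x y < r}, r a nonzero distance: the preimage of every basic
  entourage of the target (a finite intersection of generators) contains a
  basic entourage of the source.\<close>
definition unif_cont2 ::
  "'a set \<Rightarrow> 'd::linorder set \<Rightarrow> 'd \<Rightarrow> ('a \<Rightarrow> 'a \<Rightarrow> 'd) \<Rightarrow>
   'b set \<Rightarrow> 'e::linorder set \<Rightarrow> 'e \<Rightarrow> ('b \<Rightarrow> 'b \<Rightarrow> 'e) \<Rightarrow> ('a \<Rightarrow> 'b) \<Rightarrow> bool" where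
  "unif_cont2 X D z d Y E w dY f \<longleftrightarrow>
     (\<forall>G. finite G \<and> G \<subseteq> E - {w} \<longrightarrow>
        (\<exists>F. finite F \<and> F \<subseteq> D - {z} \<and>
           (\<forall>x\<in>X. \<forall>y\<in>X. (\<forall>r\<in>F. d x y < r) \<longrightarrow> (\<forall>s\<in>G. dY (f x) (f y) < s))))"

definition dc_embedding ::
  "'a set \<Rightarrow> 'd::linorder set \<Rightarrow> 'd \<Rightarrow> ('a \<Rightarrow> 'a \<Rightarrow> 'd) \<Rightarrow>
   'b set \<Rightarrow> 'e::linorder set \<Rightarrow> 'e \<Rightarrow> ('b \<Rightarrow> 'b \<Rightarrow> 'e) \<Rightarrow> ('a \<Rightarrow> 'b) \<Rightarrow> bool" where
  "dc_embedding X D z d Y E w dY f \<longleftrightarrow>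
     inj_on f X \<and> f ` X \<subseteq> Y \<and>
     (\<exists>Df. Df ` D \<subseteq> E \<and> Df z = w \<and>
        (\<forall>r\<in>D. \<forall>s\<in>D. r \<le> s \<longleftrightarrow> Df r \<le> Df s) \<and>
        (\<forall>x\<in>X. \<forall>y\<in>X. dY (f x) (f y) = Df (d x y)))"

abbreviation Qnn :: "rat set" where "Qnn \<equiv> {q. 0 \<le> q}"

text \<open>The countable rational Urysohn ultrametric space (Fraisse limit of the finite
  ultrametric spaces with distances in Q>=0), characterised by the one-point
  extension property.\<close>
definition rat_urysohn_ultrametric :: "'u set \<Rightarrow> ('u \<Rightarrow> 'u \<Rightarrow> rat) \<Rightarrow> bool" where
  "rat_urysohn_ultrametric U dU \<longleftrightarrow>
     ultrametric2 U Qnn 0 dU \<and> countable U \<and>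
     (\<forall>A f. finite A \<and> A \<subseteq> U \<and> (\<forall>a\<in>A. 0 < f a) \<and>
        (\<forall>a\<in>A. \<forall>b\<in>A. dU a b \<le> max (f a) (f b) \<and> f a \<le> max (dU a b) (f b))
        \<longrightarrow> (\<exists>u\<in>U. \<forall>a\<in>A. dU u a = f a))"

definition urysohn_completion ::
  "'v set \<Rightarrow> ('v \<Rightarrow> 'v \<Rightarrow> rat) \<Rightarrow> 'u set \<Rightarrow> ('u \<Rightarrow> 'u \<Rightarrow> rat) \<Rightarrow> ('u \<Rightarrow> 'v) \<Rightarrow> bool" where
  "urysohn_completion V dV U dU i \<longleftrightarrow>
     rat_urysohn_ultrametric U dU \<and>
     ultrametric2 V Qnn 0 dV \<and> cauchy_complete2 V Qnn 0 dV \<and>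
     i ` U \<subseteq> V \<and> (\<forall>x\<in>U. \<forall>y\<in>U. dV (i x) (i y) = dU x y) \<and>
     dense2 V Qnn 0 dV (i ` U)"

end

theory Submission
  imports Defs Complex_Main
begin


definition sigf :: "nat set \<Rightarrow> nat \<Rightarrow> real" where
  "sigf S n = (if n \<in> S then (1/2)^n else 0)"
definition sig :: "nat set \<Rightarrow> real" where "sig S = suminf (sigf S)"

lemma sig_summable: "summable (sigf S)"
  by (rule summable_comparison_test[of _ "\<lambda>n. (1/2::real)^n"]) (auto simp: sigf_def)

lemma sig_nonneg: "0 \<le> sig S"
  unfolding sig_def by (rule suminf_nonneg[OF sig_summable]) (simp add: sigf_def)

lemma sig_mono: "S \<subseteq> T \<Longrightarrow> sig S \<le> sig T"
  unfolding sig_def by (rule suminf_le[OF _ sig_summable sig_summable]) (auto simp: sigf_def)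

lemma sig_insert: assumes "m \<notin> S" shows "sig (insert m S) = sig S + (1/2)^m"
proof -
  have "sigf (insert m S) = (\<lambda>n. sigf S n + (if n = m then (1/2)^n else 0))"
    using assms by (auto simp: sigf_def)
  moreover have "(\<lambda>n. sigf S n + (if n = m then (1/2::real)^n else 0)) sums (sig S + (1/2)^m)"
    unfolding sig_def by (rule sums_add[OF summable_sums[OF sig_summable] sums_single])
  ultimately show ?thesis unfolding sig_def by (simp add: sums_iff)
qed

lemma sig_tail: assumes "S \<subseteq> {N<..}" shows "sig S \<le> (1/2)^N"
proof -
  have "sig S = (\<Sum>n. sigf S (n + Suc N)) + (\<Sum>i<Suc N. sigf S i)"
    unfolding sig_def by (rule suminf_split_initial_segment[OF sig_summable])
  also have "(\<Sum>i<Suc N. sigf S i) = 0" by (rule sum.neutral) (use assms in \<open>auto simp: sigf_def\<close>)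
  also have "(\<Sum>n. sigf S (n + Suc N)) \<le> (\<Sum>n. (1/2)^(Suc N) * (1/2::real)^n)"
  proof (rule suminf_le)
    show "summable (\<lambda>n. sigf S (n + Suc N))" using sig_summable summable_iff_shift by blast
    show "summable (\<lambda>n. (1/2)^(Suc N) * (1/2::real)^n)" by (intro summable_mult summable_geometric) simp
  qed (auto simp: sigf_def power_add)
  also have "(\<Sum>n. (1/2)^(Suc N) * (1/2::real)^n) = (1/2)^N"
    by (subst suminf_mult) (auto simp: suminf_geometric)
  finally show ?thesis by simp
qed

lemma dist_embed:
  fixes D :: "'d::linorder set"
  assumes cE: "countable (D - {z})" and zD: "z \<in> D" and zle: "\<forall>r\<in>D. z \<le> r"
  shows "\<exists>Df::'d\<Rightarrow>rat. Df z = 0 \<and> (\<forall>r\<in>D. 0 \<le> Df r) \<and> (\<forall>r\<in>D. \<forall>s\<in>D. r < s \<longrightarrow> Df r < Df s) \<and>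
     (\<forall>s>0. D - {z} \<noteq> {} \<longrightarrow> (\<exists>r\<in>D-{z}. \<forall>r'\<in>D. r' < r \<longrightarrow> Df r' < s))"
proof -
  define E where "E = D - {z}"
  define idx where "idx = to_nat_on E"
  have inj: "inj_on idx E" unfolding idx_def E_def using cE by blast
  define Sm where "Sm r = idx ` {t\<in>E. t < r}" for r
  define Sp where "Sp r = idx ` {t\<in>E. t \<le> r}" for r
  have Sp_eq: "Sp r = insert (idx r) (Sm r)" if "r \<in> E" for r
    using that unfolding Sp_def Sm_def by (auto simp: order.order_iff_strict)
  have nin: "idx r \<notin> Sm r" if "r \<in> E" for r
    using that inj unfolding Sm_def inj_on_def by auto
  have lt: "sig (Sm r) < sig (Sp r)" if "r \<in> E" for r
    using that by (simp add: Sp_eq sig_insert nin)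
  define Df where "Df r = (if r = z then 0 else (SOME q::rat. sig (Sm r) < of_rat q \<and> of_rat q < sig (Sp r)))" for r
  have Df: "sig (Sm r) < of_rat (Df r) \<and> of_rat (Df r) < sig (Sp r)" if "r \<in> E" for r
  proof -
    have "r \<noteq> z" using that E_def by auto
    then show ?thesis unfolding Df_def using someI_ex[OF of_rat_dense[OF lt[OF that]]] by simp
  qed
  have pos: "0 < Df r" if "r \<in> E" for r
  proof -
    have "(0::real) < of_rat (Df r)" using Df[OF that] sig_nonneg[of "Sm r"] by linarith
    then show ?thesis by simp
  qed
  have Df0: "Df z = 0" unfolding Df_def by simp
  have nn: "\<forall>r\<in>D. 0 \<le> Df r"
    using pos Df0 unfolding E_def by (metis DiffI order.strict_implies_order order.refl singletonD)
  have mono: "\<forall>r\<in>D. \<forall>s\<in>D. r < s \<longrightarrow> Df r < Df s"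
  proof (intro ballI impI)
    fix r s assume rs: "r \<in> D" "s \<in> D" "r < s"
    have sE: "s \<in> E" using rs zle E_def by force
    show "Df r < Df s"
    proof (cases "r = z")
      case True then show ?thesis using pos[OF sE] Df0 by simp
    next
      case False
      then have rE: "r \<in> E" using rs E_def by auto
      have "Sp r \<subseteq> Sm s" unfolding Sp_def Sm_def using rs(3) by auto
      then have "of_rat (Df r) < (of_rat (Df s) :: real)"
        using Df[OF rE] Df[OF sE] sig_mono[of "Sp r" "Sm s"] by linarith
      then show ?thesis by (simp only: of_rat_less)
    qed
  qed
  have P: "\<forall>s>0. D - {z} \<noteq> {} \<longrightarrow> (\<exists>r\<in>D-{z}. \<forall>r'\<in>D. r' < r \<longrightarrow> Df r' < s)"
  proof (intro allI impI)
    fix s :: rat assume s: "0 < s" and ne: "D - {z} \<noteq> {}"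
    show "\<exists>r\<in>D-{z}. \<forall>r'\<in>D. r' < r \<longrightarrow> Df r' < s"
    proof (cases "\<exists>m\<in>E. \<forall>t\<in>E. m \<le> t")
      case True
      then obtain m where m: "m \<in> E" "\<forall>t\<in>E. m \<le> t" by blast
      have "\<forall>r'\<in>D. r' < m \<longrightarrow> Df r' < s"
        using m s Df0 unfolding E_def by (metis DiffI leD singletonD)
      then show ?thesis using m E_def by blast
    next
      case False
      obtain N where N: "(1/2::real)^N < of_rat s"
        using real_arch_pow_inv[of "of_rat s" "1/2"] s by auto
      define T where "T = {t\<in>E. idx t \<le> N}"
      have fT: "finite T"
      proof -
        have "finite (idx ` T)" unfolding T_def by (rule finite_subset[of _ "{..N}"]) auto
        moreover have "inj_on idx T" using inj unfolding T_def by (auto intro: inj_on_subset)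
        ultimately show ?thesis using finite_imageD by blast
      qed
      obtain r where r: "r \<in> E" "\<forall>t\<in>T. r < t"
      proof (cases "T = {}")
        case True
        then show ?thesis using that ne E_def by blast
      next
        case False
        have "Min T \<in> E" using Min_in[OF fT False] T_def by auto
        then obtain r where "r \<in> E" "r < Min T" using \<open>\<not> (\<exists>m\<in>E. \<forall>t\<in>E. m \<le> t)\<close> by (meson not_le)
        then show ?thesis using that fT False by (meson Min_le less_le_trans)
      qed
      have tail: "Sm r \<subseteq> {N<..}"
        unfolding Sm_def using r T_def by force
      have "\<forall>r'\<in>D. r' < r \<longrightarrow> Df r' < s"
      proof (intro ballI impI)
        fix r' assume r': "r' \<in> D" "r' < r"
        show "Df r' < s"
        proof (cases "r' = z")
          case True then show ?thesis using Df0 s by simp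
        next
          case False
          then have r'E: "r' \<in> E" using r' E_def by auto
          have "Sp r' \<subseteq> Sm r" unfolding Sp_def Sm_def using r' by auto
          then have "of_rat (Df r') < (of_rat s :: real)"
            using Df[OF r'E] sig_mono[of "Sp r'" "Sm r"] sig_tail[OF tail] N by linarith
          then show ?thesis by (simp only: of_rat_less)
        qed
      qed
      then show ?thesis using r E_def by blast
    qed
  qed
  show ?thesis using Df0 nn mono P by blast
qed


lemma um_D: assumes "ultrametric2 X D z d"
  shows "x \<in> X \<Longrightarrow> y \<in> X \<Longrightarrow> d x y \<in> D"
    and "x \<in> X \<Longrightarrow> y \<in> X \<Longrightarrow> d x y = d y x"
    and "x \<in> X \<Longrightarrow> y \<in> X \<Longrightarrow> d x y = z \<longleftrightarrow> x = y"
    and "x \<in> X \<Longrightarrow> d x x = z"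
    and "x \<in> X \<Longrightarrow> y \<in> X \<Longrightarrow> w \<in> X \<Longrightarrow> d x w \<le> max (d x y) (d y w)"
    and "r \<in> D \<Longrightarrow> z \<le> r" and "z \<in> D"
  using assms unfolding ultrametric2_def by blast+

lemma embed_countable:
  fixes C :: "'a set" and rho :: "'a \<Rightarrow> 'a \<Rightarrow> rat"
  assumes RU: "rat_urysohn_ultrametric U dU" and cC: "countable C" and um: "ultrametric2 C Qnn 0 rho"
  shows "\<exists>g. g ` C \<subseteq> U \<and> (\<forall>a\<in>C. \<forall>b\<in>C. dU (g a) (g b) = rho a b)"
proof (cases "C = {}")
  case True then show ?thesis by auto
next
  case False
  have umU: "ultrametric2 U Qnn 0 dU" and ext: "\<And>A f. finite A \<Longrightarrow> A \<subseteq> U \<Longrightarrow> (\<forall>a\<in>A. 0 < f a) \<Longrightarrow>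
        (\<forall>a\<in>A. \<forall>b\<in>A. dU a b \<le> max (f a) (f b) \<and> f a \<le> max (dU a b) (f b))
        \<Longrightarrow> (\<exists>u\<in>U. \<forall>a\<in>A. dU u a = f a)"
    using RU unfolding rat_urysohn_ultrametric_def by auto
  define f where "f = from_nat_into C"
  have fC: "f n \<in> C" for n unfolding f_def using False by (rule from_nat_into)
  have rf: "range f = C" using False cC f_def by simp
  define good where "good l \<longleftrightarrow> set l \<subseteq> U \<and> (\<forall>k<length l. \<forall>k'<length l. dU (l!k) (l!k') = rho (f k) (f k'))" for l
  define P where "P l u \<longleftrightarrow> u \<in> U \<and> (\<forall>k<length l. dU u (l!k) = rho (f (length l)) (f k))" for l u
  have step: "\<exists>u. P l u" if g: "good l" for l
  proof -
    let ?n = "length l"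
    show ?thesis
    proof (cases "\<exists>j<?n. f j = f ?n")
      case True
      then obtain j where j: "j < ?n" "f j = f ?n" by blast
      have "P l (l!j)" unfolding P_def using g j unfolding good_def by (auto simp: nth_mem subsetD)
      then show ?thesis by blast
    next
      case False
      have wd: "rho (f ?n) (f k) = rho (f ?n) (f k')" if "k < ?n" "k' < ?n" "l!k = l!k'" for k k'
      proof -
        have "rho (f k) (f k') = 0" using g that um_D(4)[OF umU, of "l!k"] unfolding good_def
          by (metis nth_mem subsetD)
        then have "f k = f k'" using um_D(3)[OF um] fC by blast
        then show ?thesis by simp
      qed
      define h where "h a = rho (f ?n) (f (SOME k. k < ?n \<and> l!k = a))" for a
      have h: "h (l!k) = rho (f ?n) (f k)" if "k < ?n" for k
      proof -
        have "\<exists>k'. k' < ?n \<and> l!k' = l!k" using that by blast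
        then have "(SOME k'. k' < ?n \<and> l!k' = l!k) < ?n \<and> l!(SOME k'. k' < ?n \<and> l!k' = l!k) = l!k"
          by (rule someI_ex)
        then show ?thesis unfolding h_def using wd that by metis
      qed
      have "\<exists>u\<in>U. \<forall>a\<in>set l. dU u a = h a"
      proof (rule ext)
        show "finite (set l)" by simp
        show "set l \<subseteq> U" using g good_def by blast
        show "\<forall>a\<in>set l. 0 < h a"
        proof
          fix a assume "a \<in> set l"
          then obtain k where k: "k < ?n" "a = l!k" by (metis in_set_conv_nth)
          have "f ?n \<noteq> f k" using False k by metis
          then have "rho (f ?n) (f k) \<noteq> 0" using um_D(3)[OF um] fC by blast
          moreover have "rho (f ?n) (f k) \<ge> 0" using um_D(1)[OF um] fC by blast
          ultimately show "0 < h a" using h k by simp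
        qed
        show "\<forall>a\<in>set l. \<forall>b\<in>set l. dU a b \<le> max (h a) (h b) \<and> h a \<le> max (dU a b) (h b)"
        proof (intro ballI)
          fix a b assume "a \<in> set l" "b \<in> set l"
          then obtain k k' where k: "k < ?n" "a = l!k" "k' < ?n" "b = l!k'" by (metis in_set_conv_nth)
          have e: "dU a b = rho (f k) (f k')" using g k unfolding good_def by blast
          have 1: "rho (f k) (f k') \<le> max (rho (f ?n) (f k)) (rho (f ?n) (f k'))"
            using um_D(5)[OF um, of "f k" "f ?n" "f k'"] um_D(2)[OF um, of "f k" "f ?n"] fC by simp
          have 2: "rho (f ?n) (f k) \<le> max (rho (f k) (f k')) (rho (f ?n) (f k'))"
            using um_D(5)[OF um, of "f ?n" "f k'" "f k"] um_D(2)[OF um, of "f k" "f k'"] fC by (simp add: max.commute)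
          show "dU a b \<le> max (h a) (h b) \<and> h a \<le> max (dU a b) (h b)"
            using 1 2 e h k by simp
        qed
      qed
      then obtain u where u: "u \<in> U" "\<forall>a\<in>set l. dU u a = h a" by blast
      have "P l u" unfolding P_def using u h by (simp add: nth_mem)
      then show ?thesis by blast
    qed
  qed
  define nxt where "nxt l = l @ [SOME u. P l u]" for l
  define L where "L n = (nxt ^^ n) []" for n
  have LS: "L (Suc n) = L n @ [SOME u. P (L n) u]" for n unfolding L_def nxt_def by simp
  have len: "length (L n) = n" for n by (induction n) (auto simp: LS, simp add: L_def)
  have gL: "good (L n)" for n
  proof (induction n)
    case 0 then show ?case by (simp add: L_def good_def)
  next
    case (Suc n)
    define u where "u = (SOME u. P (L n) u)"
    have Pu: "P (L n) u" unfolding u_def using step[OF Suc] by (rule someI_ex)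
    have uU: "u \<in> U" using Pu P_def by blast
    have LSu: "L (Suc n) = L n @ [u]" using LS u_def by simp
    have 1: "set (L (Suc n)) \<subseteq> U" using Suc uU LSu good_def by auto
    have 2: "dU (L (Suc n)!k) (L (Suc n)!k') = rho (f k) (f k')" if kk: "k < Suc n" "k' < Suc n" for k k'
    proof -
      have nth: "L (Suc n) ! j = (if j < n then L n ! j else u)" if "j < Suc n" for j
        using that LSu len[of n] by (auto simp: nth_append)
      have Lin: "L n ! j \<in> U" if "j < n" for j using Suc that len[of n] good_def by (metis nth_mem subsetD)
      consider "k < n" "k' < n" | "k = n" "k' < n" | "k < n" "k' = n" | "k = n" "k' = n" using kk by linarith
      then show ?thesis
      proof cases
        case 1 then show ?thesis using nth kk Suc len[of n] good_def by auto
      next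
        case 2 then show ?thesis using nth kk Pu len[of n] P_def by auto
      next
        case 3 then show ?thesis using nth kk Pu len[of n] P_def um_D(2)[OF umU, of u] um_D(2)[OF um] fC uU Lin
          by auto
      next
        case 4 then show ?thesis using nth um_D(4)[OF umU uU] um_D(4)[OF um] fC by auto
      qed
    qed
    show ?case using 1 2 len[of "Suc n"] unfolding good_def by auto
  qed
  have pre: "L n ! k = L m ! k" if km: "k < m" "m \<le> n" for k m n
    using km(2)
  proof (induction n)
    case 0 then show ?case using km by simp
  next
    case (Suc n)
    show ?case
    proof (cases "m = Suc n")
      case True then show ?thesis by simp
    next
      case False then have "m \<le> n" using Suc by simp
      then show ?thesis using Suc km len[of n] by (simp add: LS nth_append)
    qed
  qed
  define idx where "idx c = (SOME n. f n = c)" for c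
  have fidx: "f (idx c) = c" if "c \<in> C" for c
    unfolding idx_def using that rf by (metis (mono_tags) image_iff someI_ex)
  define g where "g c = L (Suc (idx c)) ! idx c" for c
  have gm: "g c = L m ! idx c" if "idx c < m" for c m
    unfolding g_def using pre[of "idx c" "Suc (idx c)"] pre[of "idx c" m] that
    by (metis Suc_leI lessI nat_le_linear)
  have "g ` C \<subseteq> U"
    using gL len unfolding g_def good_def by (auto intro!: nth_mem[THEN subsetD[rotated]] simp: subset_iff)
  moreover have "\<forall>a\<in>C. \<forall>b\<in>C. dU (g a) (g b) = rho a b"
  proof (intro ballI)
    fix a b assume ab: "a \<in> C" "b \<in> C"
    define m where "m = Suc (max (idx a) (idx b))"
    have "dU (g a) (g b) = dU (L m ! idx a) (L m ! idx b)" using gm[of a m] gm[of b m] m_def by simp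
    also have "\<dots> = rho (f (idx a)) (f (idx b))" using gL[of m] len[of m] m_def unfolding good_def by auto
    finally show "dU (g a) (g b) = rho a b" using fidx ab by simp
  qed
  ultimately show ?thesis by blast
qed


lemma um4: assumes "ultrametric2 X Qnn 0 d" "a \<in> X" "b \<in> X" "c \<in> X" "e \<in> X"
  shows "d a e \<le> max (d a b) (max (d b c) (d c e))"
proof -
  have "d a e \<le> max (d a b) (d b e)" using um_D(5)[OF assms(1)] assms by blast
  moreover have "d b e \<le> max (d b c) (d c e)" using um_D(5)[OF assms(1)] assms by blast
  ultimately show ?thesis by (simp add: max_def split: if_splits)
qed

lemma extend_completion:
  fixes rho :: "'a \<Rightarrow> 'a \<Rightarrow> rat" and dV :: "'v \<Rightarrow> 'v \<Rightarrow> rat"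
  assumes umV: "ultrametric2 V Qnn 0 dV" and cc: "cauchy_complete2 V Qnn 0 dV"
    and um: "ultrametric2 X Qnn 0 rho" and CX: "C \<subseteq> X" and phiV: "phi ` C \<subseteq> V"
    and iso: "\<forall>a\<in>C. \<forall>b\<in>C. dV (phi a) (phi b) = rho a b"
    and dense: "\<forall>x\<in>X. \<forall>s>0. \<exists>c\<in>C. rho c x < s"
  shows "\<exists>e. e ` X \<subseteq> V \<and> (\<forall>x\<in>X. \<forall>y\<in>X. dV (e x) (e y) = rho x y)"
proof -
  define BB where "BB x = {ball2 V dV (phi c) s | c s. c \<in> C \<and> 0 < s \<and> rho c x < s}" for x
  have ex: "V \<inter> \<Inter>(BB x) \<noteq> {}" if x: "x \<in> X" for x
  proof -
    have "BB x \<subseteq> balls2 V Qnn 0 dV"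
      unfolding BB_def balls2_def using phiV by fastforce
    moreover have "\<forall>A\<in>BB x. \<forall>B\<in>BB x. A \<subseteq> B \<or> B \<subseteq> A"
    proof (intro ballI)
      fix A B assume "A \<in> BB x" "B \<in> BB x"
      then obtain c s c' s' where A: "A = ball2 V dV (phi c) s" "c \<in> C" "0 < s" "rho c x < s"
        and B: "B = ball2 V dV (phi c') s'" "c' \<in> C" "0 < s'" "rho c' x < s'"
        unfolding BB_def by blast
      have gen: "ball2 V dV (phi c) s \<subseteq> ball2 V dV (phi c') s'"
        if "c \<in> C" "rho c x < s" "c' \<in> C" "rho c' x < s'" "s \<le> s'" for c c' s s'
      proof
        fix y assume y: "y \<in> ball2 V dV (phi c) s"
        then have yV: "y \<in> V" and ys: "dV y (phi c) < s" unfolding ball2_def by auto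
        have "rho c c' \<le> max (rho c x) (rho x c')" using um_D(5)[OF um] that CX x by blast
        moreover have "rho x c' = rho c' x" using um_D(2)[OF um] that CX x by blast
        ultimately have cc': "rho c c' < s'" using that by simp
        have "dV y (phi c') \<le> max (dV y (phi c)) (dV (phi c) (phi c'))"
          using um_D(5)[OF umV] yV phiV that by blast
        then have "dV y (phi c') < s'" using cc' iso that ys by auto
        then show "y \<in> ball2 V dV (phi c') s'" using yV unfolding ball2_def by auto
      qed
      show "A \<subseteq> B \<or> B \<subseteq> A"
      proof (cases "s \<le> s'")
        case True then show ?thesis using gen A B by blast
      next
        case False then show ?thesis using gen[of c' s' c s] A B by simp
      qed
    qed
    moreover have "\<forall>r\<in>Qnn - {0}. \<exists>B\<in>BB x. \<exists>a\<in>V. B \<subseteq> ball2 V dV a r"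
    proof
      fix r assume "r \<in> Qnn - {0}"
      then have r: "0 < r" by auto
      then obtain c where c: "c \<in> C" "rho c x < r" using dense x by blast
      then have "ball2 V dV (phi c) r \<in> BB x" unfolding BB_def using r by blast
      then show "\<exists>B\<in>BB x. \<exists>a\<in>V. B \<subseteq> ball2 V dV a r" using c phiV by blast
    qed
    ultimately show ?thesis using cc unfolding cauchy_complete2_def by blast
  qed
  define e where "e x = (SOME v. v \<in> V \<inter> \<Inter>(BB x))" for x
  have e: "e x \<in> V \<and> (\<forall>c\<in>C. \<forall>s>0. rho c x < s \<longrightarrow> dV (e x) (phi c) < s)" if x: "x \<in> X" for x
  proof -
    have "e x \<in> V \<inter> \<Inter>(BB x)" unfolding e_def using ex[OF x] by (metis all_not_in_conv someI_ex)
    then show ?thesis unfolding BB_def ball2_def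
      by (smt (verit, del_insts) Int_iff InterE mem_Collect_eq um_D(2)[OF umV] phiV image_subset_iff)
  qed
  have iso2: "dV (e x) (e y) = rho x y" if xy: "x \<in> X" "y \<in> X" for x y
  proof (cases "x = y")
    case True then show ?thesis using um_D(4)[OF um] um_D(4)[OF umV] e xy by metis
  next
    case False
    define t where "t = rho x y"
    have t0: "0 < t" using False um_D(1,3)[OF um] xy t_def by force
    obtain c where c: "c \<in> C" "rho c x < t" using dense xy t0 by blast
    obtain c' where c': "c' \<in> C" "rho c' y < t" using dense xy t0 by blast
    have cX: "c \<in> X" "c' \<in> X" using c c' CX by auto
    have s1: "rho x c = rho c x" "rho y c' = rho c' y" "rho c y = rho y c" using um_D(2)[OF um] cX xy by auto
    have "rho c c' \<le> max (rho c x) (max (rho x y) (rho y c'))" using um4[OF um] cX xy by blast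
    then have le1: "rho c c' \<le> t" using c c' s1 t_def by simp
    have "rho x y \<le> max (rho x c) (max (rho c c') (rho c' y))" using um4[OF um] cX xy by blast
    then have ge1: "t \<le> rho c c'" using c c' s1 t_def by (auto simp: max_def split: if_splits)
    have cc': "dV (phi c) (phi c') = t" using le1 ge1 iso c c' by auto
    have ex': "e x \<in> V" "dV (e x) (phi c) < t" using e[OF xy(1)] c t0 by auto
    have ey': "e y \<in> V" "dV (e y) (phi c') < t" using e[OF xy(2)] c' t0 by auto
    have pV: "phi c \<in> V" "phi c' \<in> V" using phiV c c' by auto
    have sy: "dV (phi c) (e x) = dV (e x) (phi c)" "dV (phi c') (e y) = dV (e y) (phi c')"
      using um_D(2)[OF umV] pV ex' ey' by auto
    have "dV (e x) (e y) \<le> max (dV (e x) (phi c)) (max (dV (phi c) (phi c')) (dV (phi c') (e y)))"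
      using um4[OF umV] pV ex' ey' by blast
    then have "dV (e x) (e y) \<le> t" using ex' ey' cc' sy by simp
    moreover have "dV (phi c) (phi c') \<le> max (dV (phi c) (e x)) (max (dV (e x) (e y)) (dV (e y) (phi c')))"
      using um4[OF umV] pV ex' ey' by blast
    then have "t \<le> dV (e x) (e y)" using ex' ey' cc' sy by (auto simp: max_def split: if_splits)
    ultimately show ?thesis using t_def by simp
  qed
  show ?thesis using e iso2 by blast
qed


lemma um4g: assumes "ultrametric2 X D z d" "a \<in> X" "b \<in> X" "c \<in> X" "e \<in> X"
  shows "d a e \<le> max (d a b) (max (d b c) (d c e))"
proof -
  have "d a e \<le> max (d a b) (d b e)" using um_D(5)[OF assms(1)] assms by blast
  moreover have "d b e \<le> max (d b c) (d c e)" using um_D(5)[OF assms(1)] assms by blast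
  ultimately show ?thesis by (meson max.mono order.refl order.trans)
qed

lemma um_subset: "ultrametric2 X D z d \<Longrightarrow> C \<subseteq> X \<Longrightarrow> ultrametric2 C D z d"
  unfolding ultrametric2_def by blast

theorem corollary3p22:
  fixes X :: "'a set" and D :: "'d::linorder set" and z :: 'd and d :: "'a \<Rightarrow> 'a \<Rightarrow> 'd"
    and U :: "'u set" and dU :: "'u \<Rightarrow> 'u \<Rightarrow> rat"
    and V :: "'v set" and dV :: "'v \<Rightarrow> 'v \<Rightarrow> rat" and i :: "'u \<Rightarrow> 'v"
  assumes "ultrametric2 X D z d" and "precise2 X D d" and "separable2 X D z d"
    and "urysohn_completion V dV U dU i"
  shows "\<exists>e. dc_embedding X D z d V Qnn 0 dV e \<and> unif_cont2 X D z d V Qnn 0 dV e"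
proof -
  note umX = assms(1)
  obtain C where cC: "countable C" and dC: "dense2 X D z d C" using assms(3) unfolding separable2_def by blast
  have CX: "C \<subseteq> X" using dC unfolding dense2_def by blast
  have RU: "rat_urysohn_ultrametric U dU" and umV: "ultrametric2 V Qnn 0 dV"
    and ccV: "cauchy_complete2 V Qnn 0 dV" and iU: "i ` U \<subseteq> V"
    and iiso: "\<forall>x\<in>U. \<forall>y\<in>U. dV (i x) (i y) = dU x y"
    using assms(4) unfolding urysohn_completion_def by blast+
  have dens1: "\<exists>c\<in>C. d c x < r" if x: "x \<in> X" and r: "r \<in> D - {z}" for x r
  proof -
    have zr: "z < r" using r um_D(6)[OF umX, of r] by (auto simp: order.strict_iff_order)
    have "ball2 X d x r \<in> balls2 X D z d" using x r unfolding balls2_def by blast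
    moreover have "x \<in> X \<inter> \<Inter>{ball2 X d x r}" using x zr um_D(4)[OF umX x] unfolding ball2_def by simp
    moreover have H: "\<forall>F. finite F \<and> F \<subseteq> balls2 X D z d \<and> X \<inter> \<Inter>F \<noteq> {} \<longrightarrow> C \<inter> \<Inter>F \<noteq> {}"
      using dC unfolding dense2_def by blast
    ultimately have "C \<inter> \<Inter>{ball2 X d x r} \<noteq> {}" using H[rule_format, of "{ball2 X d x r}"] by blast
    then show ?thesis unfolding ball2_def by auto
  qed
  have cE: "countable (D - {z})"
  proof (rule countable_subset)
    show "countable ((\<lambda>(c, c'). d c c') ` (C \<times> C))" using cC by (intro countable_image countable_SIGMA) auto
    show "D - {z} \<subseteq> (\<lambda>(c, c'). d c c') ` (C \<times> C)"
    proof
      fix r assume r: "r \<in> D - {z}"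
      then obtain x y where xy: "x \<in> X" "y \<in> X" "d x y = r" using assms(2) unfolding precise2_def by blast
      obtain c where c: "c \<in> C" "d c x < r" using dens1 xy r by blast
      obtain c' where c': "c' \<in> C" "d c' y < r" using dens1 xy r by blast
      have cX: "c \<in> X" "c' \<in> X" using c c' CX by auto
      have s1: "d x c = d c x" "d y c' = d c' y" using um_D(2)[OF umX] cX xy by auto
      have "d c c' \<le> max (d c x) (max (d x y) (d y c'))" using um4g[OF umX] cX xy by blast
      then have le1: "d c c' \<le> r" using c c' s1 xy by simp
      have "d x y \<le> max (d x c) (max (d c c') (d c' y))" using um4g[OF umX] cX xy by blast
      then have ge1: "r \<le> d c c'" using c c' s1 xy by (auto simp: max_def split: if_splits)
      have "r = d c c'" using le1 ge1 by simp
      then show "r \<in> (\<lambda>(c, c'). d c c') ` (C \<times> C)" using c(1) c'(1) by (auto intro: image_eqI[of _ _ "(c, c')"])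
    qed
  qed
  obtain Df :: "'d \<Rightarrow> rat" where Df0: "Df z = 0" and Dfnn: "\<forall>r\<in>D. 0 \<le> Df r"
    and Dfm: "\<forall>r\<in>D. \<forall>s\<in>D. r < s \<longrightarrow> Df r < Df s"
    and DfP: "\<forall>s>0. D - {z} \<noteq> {} \<longrightarrow> (\<exists>r\<in>D-{z}. \<forall>r'\<in>D. r' < r \<longrightarrow> Df r' < s)"
    using dist_embed[of D z] cE um_D(6,7)[OF umX] by blast
  have Dfle: "r \<le> s \<longleftrightarrow> Df r \<le> Df s" if "r \<in> D" "s \<in> D" for r s
  proof
    assume "r \<le> s" then show "Df r \<le> Df s" using Dfm that by (cases "r = s") (auto simp: order.order_iff_strict)
  next
    assume "Df r \<le> Df s" then show "r \<le> s" using Dfm that by (meson leD not_le)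
  qed
  have Dfeq: "Df r = Df s \<longleftrightarrow> r = s" if "r \<in> D" "s \<in> D" for r s
    using Dfle[OF that] Dfle[OF that(2) that(1)] by (auto intro: order.antisym)
  define rho where "rho x y = Df (d x y)" for x y
  have umR: "ultrametric2 X Qnn 0 rho"
    unfolding ultrametric2_def
  proof (intro conjI ballI)
    fix x y assume xy: "x \<in> X" "y \<in> X"
    show "rho x y \<in> Qnn" using Dfnn um_D(1)[OF umX xy] rho_def by simp
    show "rho x y = rho y x" using um_D(2)[OF umX xy] rho_def by simp
    show "(rho x y = 0) = (x = y)" using um_D(3)[OF umX xy] Dfeq[OF um_D(1)[OF umX xy] um_D(7)[OF umX]] Df0 rho_def by simp
    fix w assume w: "w \<in> X"
    have "d x w \<le> max (d x y) (d y w)" using um_D(5)[OF umX] xy w by blast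
    then show "rho x w \<le> max (rho x y) (rho y w)" unfolding rho_def
    proof (cases "d x y \<le> d y w")
      case True
      then have "d x w \<le> d y w" using \<open>d x w \<le> max (d x y) (d y w)\<close> by simp
      then have "Df (d x w) \<le> Df (d y w)" using Dfle um_D(1)[OF umX] xy w by blast
      then show "Df (d x w) \<le> max (Df (d x y)) (Df (d y w))" by simp
    next
      case False
      then have "d x w \<le> d x y" using \<open>d x w \<le> max (d x y) (d y w)\<close> by simp
      then have "Df (d x w) \<le> Df (d x y)" using Dfle um_D(1)[OF umX] xy w by blast
      then show "Df (d x w) \<le> max (Df (d x y)) (Df (d y w))" by simp
    qed
  qed auto
  obtain g where gU: "g ` C \<subseteq> U" and giso: "\<forall>a\<in>C. \<forall>b\<in>C. dU (g a) (g b) = rho a b"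
    using embed_countable[OF RU cC um_subset[OF umR CX]] by blast
  define phi where "phi c = i (g c)" for c
  have phiV: "phi ` C \<subseteq> V" using gU iU phi_def by auto
  have piso: "\<forall>a\<in>C. \<forall>b\<in>C. dV (phi a) (phi b) = rho a b" unfolding phi_def using giso iiso gU by (simp add: image_subset_iff)
  have denseR: "\<forall>x\<in>X. \<forall>s>0. \<exists>c\<in>C. rho c x < s"
  proof (intro ballI allI impI)
    fix x s assume x: "x \<in> X" and s: "(0::rat) < s"
    show "\<exists>c\<in>C. rho c x < s"
    proof (cases "D - {z} = {}")
      case True
      have "C \<inter> \<Inter>{} \<noteq> {}" using dC x unfolding dense2_def by blast
      then obtain c where c: "c \<in> C" by auto
      then have "d c x = z" using True um_D(1)[OF umX] CX x by blast
      then have "rho c x < s" using s Df0 unfolding rho_def by simp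
      then show ?thesis using c by blast
    next
      case False
      then obtain r where r: "r \<in> D - {z}" "\<forall>r'\<in>D. r' < r \<longrightarrow> Df r' < s" using DfP s by blast
      obtain c where c: "c \<in> C" "d c x < r" using dens1 x r by blast
      have "d c x \<in> D" using um_D(1)[OF umX] CX x c by blast
      then show ?thesis using r c unfolding rho_def by blast
    qed
  qed
  obtain e where eV: "e ` X \<subseteq> V" and eiso: "\<forall>x\<in>X. \<forall>y\<in>X. dV (e x) (e y) = rho x y"
    using extend_completion[OF umV ccV umR CX phiV piso denseR] by blast
  have "dc_embedding X D z d V Qnn 0 dV e"
    unfolding dc_embedding_def
  proof (intro conjI exI[of _ Df])
    show "inj_on e X"
    proof (rule inj_onI)
      fix x y assume xy: "x \<in> X" "y \<in> X" "e x = e y"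
      have "e x \<in> V" using eV xy by auto
      then have "dV (e x) (e y) = 0" using xy(3) um_D(4)[OF umV] by simp
      moreover have "dV (e x) (e y) = rho x y" using eiso xy(1,2) by blast
      ultimately have "rho x y = 0" by simp
      then show "x = y" using um_D(3)[OF umR] xy by blast
    qed
    show "e ` X \<subseteq> V" by (rule eV)
    show "Df ` D \<subseteq> Qnn" using Dfnn by auto
    show "Df z = 0" by (rule Df0)
    show "\<forall>r\<in>D. \<forall>s\<in>D. (r \<le> s) = (Df r \<le> Df s)" using Dfle by blast
    show "\<forall>x\<in>X. \<forall>y\<in>X. dV (e x) (e y) = Df (d x y)" using eiso rho_def by simp
  qed
  moreover have "unif_cont2 X D z d V Qnn 0 dV e"
    unfolding unif_cont2_def
  proof (intro allI impI)
    fix G assume G: "finite G \<and> G \<subseteq> Qnn - {0}"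
    show "\<exists>F. finite F \<and> F \<subseteq> D - {z} \<and> (\<forall>x\<in>X. \<forall>y\<in>X. (\<forall>r\<in>F. d x y < r) \<longrightarrow> (\<forall>s\<in>G. dV (e x) (e y) < s))"
    proof (cases "G = {} \<or> D - {z} = {}")
      case True
      have "\<forall>x\<in>X. \<forall>y\<in>X. (\<forall>s\<in>G. dV (e x) (e y) < s)"
      proof (intro ballI)
        fix x y s assume xy: "x \<in> X" "y \<in> X" and sG: "s \<in> G"
        then have "D - {z} = {}" using True by auto
        then have "x = y" using xy um_D(1,3)[OF umX] by blast
        then have "dV (e x) (e y) = 0" using eiso um_D(4)[OF umR] xy by simp
        then show "dV (e x) (e y) < s" using sG G by auto
      qed
      then show ?thesis by (intro exI[of _ "{}"]) auto
    next
      case False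
      define s0 where "s0 = Min G"
      have s0G: "s0 \<in> G" "\<forall>s\<in>G. s0 \<le> s" using G False s0_def by auto
      then have "0 < s0" using G by auto
      then obtain r where r: "r \<in> D - {z}" "\<forall>r'\<in>D. r' < r \<longrightarrow> Df r' < s0" using DfP False by blast
      have "\<forall>x\<in>X. \<forall>y\<in>X. d x y < r \<longrightarrow> (\<forall>s\<in>G. dV (e x) (e y) < s)"
      proof (intro ballI impI)
        fix x y s assume xy: "x \<in> X" "y \<in> X" and dr: "d x y < r" and sG: "s \<in> G"
        have "Df (d x y) < s0" using r dr um_D(1)[OF umX xy] by blast
        then show "dV (e x) (e y) < s" using eiso xy sG s0G unfolding rho_def by fastforce
      qed
      then show ?thesis using r by (intro exI[of _ "{r}"]) auto
    qed
  qed
  ultimately show ?thesis by blast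
qed

end
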